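(* Let $P_0,P_1,P_2\in\mathbb H$ be distinct, labelled so that $\chi:=\langle P_0\tilde\times P_1,P_2\rangle\ge0$ and so that $d_0=\max\{d_0,d_1,d_2\}$, where $d_i:=\sqrt{1-2\langle P_{i+1},P_{i+2}\rangle}$ for $i\in\mathbb Z/3\mathbb Z$. Let $\varepsilon\in\{-1,1\}$, $\alpha:=-1+\langle P_0,P_1\rangle+\langle P_1,P_2\rangle+\langle P_2,P_0\rangle$, $\gamma:=3(d_0^2+1)(d_1^2+1)(d_2^2+1)$, $$r_d:=\frac4\gamma\Bigl(-2\alpha(d_0d_1d_2-d_0-d_1-d_2)-2\varepsilon\chi(d_0d_1+d_1d_2+d_2d_0-1)\Bigr),\qquad r_i:=\frac{|r_d|}{d_{i+1}+d_{i+2}}.$$ Then for every $i\in\mathbb Z/3\mathbb Z$, $$r_i\le\rho:=\frac23+\frac2{27}+\frac1{3\sqrt3}\approx0.93319.$$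
   Context: $\langle v,w\rangle=-v_1w_1+v_2w_2+v_3w_3$ on $\mathbb R^3$; $\mathbb H=\{P\in\mathbb R^3:\langle P,P\rangle=-1,\ P_1\ge1\}$; $v\tilde\times w:=J(v\times w)$ with $J=\mathrm{diag}(-1,1,1)$ and $\times$ the Euclidean cross product. *)

theory Defs
  imports "HOL-Analysis.Analysis" "HOL-Analysis.Cross3"
begin

definition mink :: "real^3 \<Rightarrow> real^3 \<Rightarrow> real" where
  "mink v w = - (v$1 * w$1) + v$2 * w$2 + v$3 * w$3"

text \<open>Hyperboloid model of the hyperbolic plane.\<close>
definition hyp :: "(real^3) set" where
  "hyp = {P. mink P P = -1 \<and> P$1 \<ge> 1}"

definition Jmat :: "real^3 \<Rightarrow> real^3" where
  "Jmat v = (\<chi> i. if i = 1 then - (v$i) else v$i)"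

definition lcross :: "real^3 \<Rightarrow> real^3 \<Rightarrow> real^3" where
  "lcross v w = Jmat (cross3 v w)"

text \<open>Points indexed by Z/3Z are given as P :: nat => real^3, indices taken mod 3.\<close>
definition dist_d :: "(nat \<Rightarrow> real^3) \<Rightarrow> nat \<Rightarrow> real" where
  "dist_d P i = sqrt (1 - 2 * mink (P ((i+1) mod 3)) (P ((i+2) mod 3)))"

definition chi_val :: "(nat \<Rightarrow> real^3) \<Rightarrow> real" where
  "chi_val P = mink (lcross (P 0) (P 1)) (P 2)"

definition alpha_val :: "(nat \<Rightarrow> real^3) \<Rightarrow> real" where
  "alpha_val P = -1 + mink (P 0) (P 1) + mink (P 1) (P 2) + mink (P 2) (P 0)"

definition gamma_val :: "(nat \<Rightarrow> real^3) \<Rightarrow> real" where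
  "gamma_val P = 3 * ((dist_d P 0)^2 + 1) * ((dist_d P 1)^2 + 1) * ((dist_d P 2)^2 + 1)"

definition r_d :: "(nat \<Rightarrow> real^3) \<Rightarrow> real \<Rightarrow> real" where
  "r_d P \<epsilon> = 4 / gamma_val P *
     (- 2 * alpha_val P * (dist_d P 0 * dist_d P 1 * dist_d P 2 - dist_d P 0 - dist_d P 1 - dist_d P 2)
      - 2 * \<epsilon> * chi_val P * (dist_d P 0 * dist_d P 1 + dist_d P 1 * dist_d P 2 + dist_d P 2 * dist_d P 0 - 1))"

definition r_i :: "(nat \<Rightarrow> real^3) \<Rightarrow> real \<Rightarrow> nat \<Rightarrow> real" where
  "r_i P \<epsilon> i = \<bar>r_d P \<epsilon>\<bar> / (dist_d P ((i+1) mod 3) + dist_d P ((i+2) mod 3))"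

definition rho :: real where
  "rho = 2/3 + 2/27 + 1 / (3 * sqrt 3)"

end

theory Submission
  imports Defs
begin

lemma chi_expand:
  "chi_val P = (P 0$2 * P 1$3 - P 0$3 * P 1$2) * P 2$1 + (P 0$3 * P 1$1 - P 0$1 * P 1$3) * P 2$2
     + (P 0$1 * P 1$2 - P 0$2 * P 1$1) * P 2$3"
  unfolding chi_val_def lcross_def Jmat_def mink_def cross3_def
  by (simp add: vector_def algebra_simps)

lemma mink_expand: "mink v w = - (v$1 * w$1) + v$2 * w$2 + v$3 * w$3"
  by (simp add: mink_def)

lemma mink_le:
  assumes "P \<in> hyp" "Q \<in> hyp" shows "mink P Q \<le> -1"
proof -
  define a1 a2 a3 b1 b2 b3 where "a1 = P$1" "a2 = P$2" "a3 = P$3" "b1 = Q$1" "b2 = Q$2" "b3 = Q$3"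
  have h: "a1^2 = 1 + a2^2 + a3^2" "b1^2 = 1 + b2^2 + b3^2" "a1 \<ge> 1" "b1 \<ge> 1"
    using assms unfolding hyp_def mink_def a1_a2_a3_b1_b2_b3_def by (auto simp: power2_eq_square)
  have cs: "(a2*b2 + a3*b3)^2 \<le> (a2^2+a3^2)*(b2^2+b3^2)"
    using sum_squares_ge_zero[of "a2*b3 - a3*b2" 0] by (simp add: power2_eq_square algebra_simps)
  have amgm: "2 * (a1*b1) \<le> a1^2 + b1^2"
    using zero_le_square[of "a1 - b1"] by (simp add: power2_eq_square algebra_simps)
  have e: "(a1*b1 - 1)^2 = a1^2*b1^2 - 2*(a1*b1) + 1"
    by (simp add: power2_eq_square algebra_simps)
  have "a1^2*b1^2 = (1 + (a2^2+a3^2))*(1+(b2^2+b3^2))" using h by (simp add: add.assoc)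
  then have "(a2^2+a3^2)*(b2^2+b3^2) \<le> (a1*b1 - 1)^2"
    using h amgm e by (simp add: algebra_simps)
  then have "(a2*b2 + a3*b3)^2 \<le> (a1*b1 - 1)^2" using cs by linarith
  moreover have "a1*b1 - 1 \<ge> 0" using mult_mono[of 1 a1 1 b1] h by simp
  ultimately have "a2*b2 + a3*b3 \<le> a1*b1 - 1"
    using abs_le_square_iff[of "a2*b2 + a3*b3" "a1*b1 - 1"] by auto
  then show ?thesis unfolding mink_def a1_a2_a3_b1_b2_b3_def by linarith
qed

lemma chi_sq:
  assumes "mink (P 0) (P 0) = -1" "mink (P 1) (P 1) = -1" "mink (P 2) (P 2) = -1"
  shows "(chi_val P)^2 = 1 - (mink (P 0) (P 1))^2 - (mink (P 1) (P 2))^2 - (mink (P 2) (P 0))^2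
     - 2 * mink (P 0) (P 1) * mink (P 1) (P 2) * mink (P 2) (P 0)"
proof -
  have "(chi_val P)^2 = - ( mink (P 0) (P 0) * (mink (P 1) (P 1) * mink (P 2) (P 2) - (mink (P 1) (P 2))^2)
     - mink (P 0) (P 1) * (mink (P 0) (P 1) * mink (P 2) (P 2) - mink (P 1) (P 2) * mink (P 2) (P 0))
     + mink (P 2) (P 0) * (mink (P 0) (P 1) * mink (P 1) (P 2) - mink (P 1) (P 1) * mink (P 2) (P 0)))"
    unfolding chi_expand mink_expand by (simp add: power2_eq_square algebra_simps)
  then show ?thesis using assms by (simp add: power2_eq_square algebra_simps)
qed

lemma poly_ineq:
  fixes d0 d1 d2 sq k :: real
  assumes s3: "sq* sq = 3" "sq \<ge> 1.7" and h1: "sq \<le> d1" and h2: "sq \<le> d2"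
    and h3: "d1 \<le> d0" and h4: "d2 \<le> d0" and h5: "d0 \<le> d1*d2"
    and kdef: "k = 2 + 2/9 + 1/sq"
  shows "4*(d0^2+d1^2+d2^2)*d0*(d1*d2) + 2*(d1*d2)^2*(d0*(d1+d2)+d1*d2)
         \<le> k * ((d0^2+1)*(d1^2+1)*(d2^2+1)*(d1+d2))"
proof -
  define D where "D = d1*d2"
  have sp: "sq > 0" using s3 by linarith
  have d1p: "d1 > 0" "d2 > 0" "d0 > 0" using sp h1 h2 h3 by linarith+
  have Dp: "D > 0" using d1p D_def by simp
  have sum_pos: "d1 + d2 > 0" using d1p by linarith
  have q0: "2*d0 \<le> d0^2+1" using zero_le_square[of "d0 - 1"] by (simp add: power2_eq_square algebra_simps)
  have i: "2*D^2*d0*(d1+d2) \<le> D^2*(d0^2+1)*(d1+d2)"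
  proof -
    have "0 \<le> D^2*(d1+d2)" using sum_pos by simp
    from mult_right_mono[OF q0 this] show ?thesis by (simp add: algebra_simps)
  qed
  have D1: "D \<le> d0*d2" unfolding D_def using mult_right_mono[OF h3, of d2] d1p by simp
  have D2: "D \<le> d0*d1" unfolding D_def using mult_right_mono[OF h4, of d1] d1p by (simp add: mult.commute)
  have twoD: "2*D \<le> d0*(d1+d2)" using D1 D2 by (simp add: algebra_simps)
  have fourD: "4*D \<le> (d0^2+1)*(d1+d2)"
    using twoD mult_right_mono[OF q0 less_imp_le[OF sum_pos]] by (simp add: algebra_simps)
  have ii: "2*D^3 \<le> (1/2)*D^2*(d0^2+1)*(d1+d2)"
  proof -
    have "0 \<le> D^2/2" by simp
    from mult_left_mono[OF fourD this] show ?thesis by (simp add: power3_eq_cube power2_eq_square algebra_simps)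
  qed
  have iii: "4*d0^3*D \<le> (2/sq)*D^2*(d0^2+1)*(d1+d2)"
  proof -
    have a: "d0^3*D \<le> d0^2*D^2"
    proof -
      have "0 \<le> d0^2*D" using Dp by simp
      from mult_left_mono[OF h5[folded D_def] this] show ?thesis by (simp add: power3_eq_cube power2_eq_square algebra_simps)
    qed
    have b: "4 \<le> (2/sq)*(d1+d2)"
    proof -
      have "2* sq \<le> d1+d2" using h1 h2 by linarith
      then have "(2/sq)*(2* sq) \<le> (2/sq)*(d1+d2)" using sp by (intro mult_left_mono) auto
      then show ?thesis using sp by simp
    qed
    have c: "4*(d0^2*D^2) \<le> (2/sq)*(d1+d2)*(d0^2*D^2)"
      using mult_right_mono[OF b, of "d0^2*D^2"] by simp
    have d: "(2/sq)*(d1+d2)*(d0^2*D^2) \<le> (2/sq)*(d1+d2)*((d0^2+1)*D^2)"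
      using sp sum_pos by (intro mult_left_mono) (auto simp: algebra_simps)
    have e: "(2/sq)*(d1+d2)*((d0^2+1)*D^2) = (2/sq)*D^2*(d0^2+1)*(d1+d2)" by (simp only: mult_ac)
    have f: "4*d0^3*D \<le> 4*(d0^2*D^2)" using a by simp
    show ?thesis using f c d e by linarith
  qed
  have iv: "4*(d1^2+d2^2)*d0*D \<le> 2*(d0^2+1)*(d1^2+d2^2+1)*(d1+d2)"
  proof -
    have "0 \<le> 2*(d1^2+d2^2)*d0" using d1p by simp
    from mult_left_mono[OF twoD this]
    have "4*(d1^2+d2^2)*d0*D \<le> 2*(d1^2+d2^2)*d0^2*(d1+d2)" by (simp add: power2_eq_square algebra_simps)
    also have "\<dots> \<le> 2*(d0^2+1)*(d1^2+d2^2+1)*(d1+d2)"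
    proof -
      have "(d1^2+d2^2)*d0^2 \<le> (d0^2+1)*(d1^2+d2^2+1)" by (simp add: algebra_simps)
      from mult_right_mono[OF this less_imp_le[OF sum_pos]]
      have "(d1^2+d2^2)*d0^2*(d1+d2) \<le> (d0^2+1)*(d1^2+d2^2+1)*(d1+d2)" .
      then show ?thesis by linarith
    qed
    finally show ?thesis .
  qed
  have kb1: "3/2 + 2/sq \<le> k"
  proof -
    have "1/sq \<le> 1/1.7" using s3 by (intro divide_left_mono) auto
    then show ?thesis using kdef by simp
  qed
  have kb2: "2 \<le> k" proof - have "0 \<le> 1/sq" using sp by simp then show ?thesis using kdef by linarith qed
  have Q: "(d0^2+1)*(d1^2+1)*(d2^2+1)*(d1+d2) = D^2*(d0^2+1)*(d1+d2) + (d0^2+1)*(d1^2+d2^2+1)*(d1+d2)"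
    unfolding D_def by (simp add: power2_eq_square algebra_simps)
  have L: "4*(d0^2+d1^2+d2^2)*d0*(d1*d2) + 2*(d1*d2)^2*(d0*(d1+d2)+d1*d2)
      = 4*d0^3*D + 4*(d1^2+d2^2)*d0*D + 2*D^2*d0*(d1+d2) + 2*D^3"
    unfolding D_def by (simp add: power2_eq_square power3_eq_cube algebra_simps)
  define X where "X = D^2*(d0^2+1)*(d1+d2)"
  define Y where "Y = (d0^2+1)*(d1^2+d2^2+1)*(d1+d2)"
  have P1: "0 \<le> X" using sum_pos unfolding X_def by simp
  have P2: "0 \<le> Y" using sum_pos unfolding Y_def by simp
  have e2: "(1/2)*D^2*(d0^2+1)*(d1+d2) = X/2" unfolding X_def by simp
  have e3: "(2/sq)*D^2*(d0^2+1)*(d1+d2) = (2/sq)*X" unfolding X_def by (simp add: mult.assoc)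
  have e4: "2*(d0^2+1)*(d1^2+d2^2+1)*(d1+d2) = 2*Y" unfolding Y_def by (simp add: mult.assoc)
  have i': "2*D^2*d0*(d1+d2) \<le> X" using i unfolding X_def .
  have m1: "(3/2 + 2/sq)*X \<le> k*X" using mult_right_mono[OF kb1 P1] .
  have m2: "2*Y \<le> k*Y" using mult_right_mono[OF kb2 P2] .
  have e5: "(3/2 + 2/sq)*X = X/2 + X + (2/sq)*X" by (simp add: distrib_right)
  have Q': "(d0^2+1)*(d1^2+1)*(d2^2+1)*(d1+d2) = X + Y" using Q unfolding X_def Y_def .
  have "4*d0^3*D + 4*(d1^2+d2^2)*d0*D + 2*D^2*d0*(d1+d2) + 2*D^3 \<le> k*X + k*Y"
    using ii iii iv i' e2 e3 e4 m1 m2 e5 by linarith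
  also have "\<dots> = k * ((d0^2+1)*(d1^2+1)*(d2^2+1)*(d1+d2))" using Q' by (simp add: distrib_left)
  finally show ?thesis using L by simp
qed

lemma main_abs:
  fixes d0 d1 d2 x e :: real
  assumes h1: "sqrt 3 \<le> d1" and h2: "sqrt 3 \<le> d2"
    and h3: "d1 \<le> d0" and h4: "d2 \<le> d0" and h5: "d0 \<le> d1*d2"
    and hx: "\<bar>x\<bar> \<le> (d1^2-1)*(d2^2-1)/4" and he: "e \<in> {-1,1}"
  shows "\<bar>4 / (3*(d0^2+1)*(d1^2+1)*(d2^2+1)) *
      ((d0^2+d1^2+d2^2-1)*(d0*d1*d2-d0-d1-d2) - 2*e*x*(d0*d1+d1*d2+d2*d0-1))\<bar> \<le> rho*(d1+d2)"
proof -
  define sq where "sq = sqrt 3"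
  have s3: "sq * sq = 3" unfolding sq_def by simp
  have s17: "sq \<ge> 1.7" unfolding sq_def by (rule real_le_rsqrt) (simp add: power2_eq_square)
  have sp: "sq > 0" using s17 by linarith
  have d1p: "d1 > 0" "d2 > 0" "d0 > 0" using sp h1 h2 h3 unfolding sq_def by linarith+
  define S where "S = d0^2+d1^2+d2^2"
  define T where "T = d0*d1*d2-d0-d1-d2"
  define B where "B = d0*d1+d1*d2+d2*d0-1"
  have sqsq: "3 \<le> d1*d2" using mult_mono[OF h1 h2] sp d1p unfolding sq_def by simp
  have T0: "0 \<le> T"
  proof -
    have "3*d0 \<le> d1*d2*d0" using mult_right_mono[OF sqsq, of d0] d1p by simp
    then show ?thesis unfolding T_def using h3 h4 by (simp add: mult_ac)
  qed
  have T1: "T \<le> d0*d1*d2" unfolding T_def using d1p by simp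
  have dd1: "d1*d2 \<le> d0*d2" using mult_right_mono[OF h3, of d2] d1p by simp
  have dd2: "d1*d2 \<le> d1*d0" using mult_left_mono[OF h4, of d1] d1p by simp
  have dd: "3 \<le> d0*d1" "3 \<le> d2*d0" "3 \<le> d1*d2"
    using dd1 dd2 sqsq by (auto simp: mult_ac)
  have B0: "0 \<le> B" unfolding B_def using dd by linarith
  have B1: "B \<le> d0*(d1+d2) + d1*d2" unfolding B_def by (simp add: algebra_simps)
  have d1ge: "1 \<le> d1" "1 \<le> d2" using h1 h2 s17 unfolding sq_def by linarith+
  have d1sq: "1 \<le> d1^2" "1 \<le> d2^2" using d1ge by (simp_all add: one_le_power)
  have S1: "1 \<le> S" unfolding S_def using d1sq by (simp add: add_increasing)
  have Dp: "0 \<le> d0*d1*d2" using d1p by simp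
  have a1: "(S-1)*T \<le> S*(d0*d1*d2)"
  proof -
    have "(S-1)*T \<le> (S-1)*(d0*d1*d2)" using S1 T1 by (intro mult_left_mono) auto
    also have "\<dots> \<le> S*(d0*d1*d2)" using Dp by (simp add: algebra_simps)
    finally show ?thesis .
  qed
  have ea: "\<bar>e\<bar> = 1" using he by auto
  have a2: "\<bar>2*e*x*B\<bar> \<le> (d1*d2)^2/2 * (d0*(d1+d2) + d1*d2)"
  proof -
    have "\<bar>2*e*x*B\<bar> = 2*\<bar>x\<bar>*B" using ea B0 by (simp add: abs_mult)
    also have "\<dots> \<le> 2*((d1^2-1)*(d2^2-1)/4)*B" using hx B0 by (intro mult_right_mono) auto
    also have "\<dots> \<le> 2*((d1*d2)^2/4)*B"
    proof -
      have q1: "0 \<le> d1^2-1" "0 \<le> d2^2-1" using d1sq by simp_all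
      have "(d1^2-1)*(d2^2-1) \<le> d1^2*d2^2" using q1 by (intro mult_mono) auto
      then show ?thesis using B0 by (intro mult_right_mono) (auto simp: power_mult_distrib)
    qed
    also have "\<dots> \<le> 2*((d1*d2)^2/4)*(d0*(d1+d2) + d1*d2)" using B1 by (intro mult_left_mono) auto
    finally show ?thesis by simp
  qed
  have N: "\<bar>(S-1)*T - 2*e*x*B\<bar> \<le> S*(d0*d1*d2) + (d1*d2)^2/2 * (d0*(d1+d2) + d1*d2)"
  proof -
    have "\<bar>(S-1)*T - 2*e*x*B\<bar> \<le> \<bar>(S-1)*T\<bar> + \<bar>2*e*x*B\<bar>" by (rule abs_triangle_ineq4)
    moreover have "\<bar>(S-1)*T\<bar> = (S-1)*T" using S1 T0 by simp
    ultimately show ?thesis using a1 a2 by linarith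
  qed
  have PI: "4*(d0^2+d1^2+d2^2)*d0*(d1*d2) + 2*(d1*d2)^2*(d0*(d1+d2)+d1*d2)
         \<le> (2 + 2/9 + 1/sq) * ((d0^2+1)*(d1^2+1)*(d2^2+1)*(d1+d2))"
    using poly_ineq[OF s3 s17 h1[folded sq_def] h2[folded sq_def] h3 h4 h5 refl] .
  have k: "2 + 2/9 + 1/sq = 3*rho" unfolding rho_def sq_def by simp
  define G where "G = 3*(d0^2+1)*(d1^2+1)*(d2^2+1)"
  have pp: "0 < d0^2+1" "0 < d1^2+1" "0 < d2^2+1" by (simp_all add: add_nonneg_pos)
  have Gp: "G > 0" unfolding G_def using pp by simp
  have "4*\<bar>(S-1)*T - 2*e*x*B\<bar> \<le> 3*rho*((d0^2+1)*(d1^2+1)*(d2^2+1)*(d1+d2))"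
  proof -
    have r1: "4*(S*(d0*d1*d2) + (d1*d2)^2/2 * (d0*(d1+d2) + d1*d2)) =
      4*(d0^2+d1^2+d2^2)*d0*(d1*d2) + 2*(d1*d2)^2*(d0*(d1+d2)+d1*d2)"
      unfolding S_def by (simp add: algebra_simps)
    have r2: "(2 + 2/9 + 1/sq) * ((d0^2+1)*(d1^2+1)*(d2^2+1)*(d1+d2)) =
       3*rho*((d0^2+1)*(d1^2+1)*(d2^2+1)*(d1+d2))" by (simp only: k)
    have "4*\<bar>(S-1)*T - 2*e*x*B\<bar> \<le> 4*(S*(d0*d1*d2) + (d1*d2)^2/2 * (d0*(d1+d2) + d1*d2))"
      by (rule mult_left_mono[OF N]) simp
    also note r1
    also note PI
    also note r2
    finally show ?thesis .
  qed
  also have "\<dots> = rho*(d1+d2)*G" unfolding G_def by (simp add: mult_ac)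
  finally have fin: "4*\<bar>(S-1)*T - 2*e*x*B\<bar> \<le> rho*(d1+d2)*G" .
  have "\<bar>4 / G * ((S-1)*T - 2*e*x*B)\<bar> = 4*\<bar>(S-1)*T - 2*e*x*B\<bar> / G"
    using Gp by (simp only: abs_mult abs_divide abs_numeral) (simp add: abs_of_pos)
  also have "\<dots> \<le> rho*(d1+d2)" using fin Gp by (simp add: pos_divide_le_eq)
  finally show ?thesis unfolding G_def S_def T_def B_def by (simp add: mult.assoc)
qed


theorem proposition5p1:
  fixes P :: "nat \<Rightarrow> real^3" and \<epsilon> :: real
  assumes "\<And>i. i < 3 \<Longrightarrow> P i \<in> hyp"
    and "\<And>i j. i < 3 \<Longrightarrow> j < 3 \<Longrightarrow> i \<noteq> j \<Longrightarrow> P i \<noteq> P j"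
    and "chi_val P \<ge> 0"
    and "dist_d P 0 = Max {dist_d P 0, dist_d P 1, dist_d P 2}"
    and "\<epsilon> \<in> {-1, 1}"
  shows "\<forall>i < 3. r_i P \<epsilon> i \<le> rho"
proof -
  have H0: "P 0 \<in> hyp" and H1: "P 1 \<in> hyp" and H2: "P 2 \<in> hyp" using assms(1) by auto
  have self: "mink (P 0) (P 0) = -1" "mink (P 1) (P 1) = -1" "mink (P 2) (P 2) = -1"
    using H0 H1 H2 unfolding hyp_def by auto
  define c0 where "c0 = - mink (P 1) (P 2)"
  define c1 where "c1 = - mink (P 2) (P 0)"
  define c2 where "c2 = - mink (P 0) (P 1)"
  have c0g: "1 \<le> c0" unfolding c0_def using mink_le[OF H1 H2] by linarith
  have c1g: "1 \<le> c1" unfolding c1_def using mink_le[OF H2 H0] by linarith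
  have c2g: "1 \<le> c2" unfolding c2_def using mink_le[OF H0 H1] by linarith
  define d0 where "d0 = dist_d P 0"
  define d1 where "d1 = dist_d P 1"
  define d2 where "d2 = dist_d P 2"
  have d0e: "d0 = sqrt (1 + 2*c0)" unfolding d0_def dist_d_def c0_def by (simp add: numeral_2_eq_2)
  have d1e: "d1 = sqrt (1 + 2*c1)" unfolding d1_def dist_d_def c1_def by (simp add: numeral_2_eq_2)
  have d2e: "d2 = sqrt (1 + 2*c2)" unfolding d2_def dist_d_def c2_def by (simp add: numeral_2_eq_2)
  have d0s: "d0^2 = 1 + 2*c0" unfolding d0e using c0g by simp
  have d1s: "d1^2 = 1 + 2*c1" unfolding d1e using c1g by simp
  have d2s: "d2^2 = 1 + 2*c2" unfolding d2e using c2g by simp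
  have d0g: "sqrt 3 \<le> d0" unfolding d0e using c0g by (intro real_sqrt_le_mono) linarith
  have d1g: "sqrt 3 \<le> d1" unfolding d1e using c1g by (intro real_sqrt_le_mono) linarith
  have d2g: "sqrt 3 \<le> d2" unfolding d2e using c2g by (intro real_sqrt_le_mono) linarith
  have s3p: "0 < sqrt (3::real)" by simp
  have dpos: "0 < d0" "0 < d1" "0 < d2" using d0g d1g d2g s3p by linarith+
  have chi2: "(chi_val P)^2 = (c1^2-1)*(c2^2-1) - (c0 - c1*c2)^2"
    using chi_sq[OF self] unfolding c0_def c1_def c2_def by (simp add: power2_eq_square algebra_simps)
  have c12: "0 \<le> c1*c2" using c1g c2g by simp
  have sq1: "(c1^2-1)*(c2^2-1) \<le> (c1*c2)^2"
  proof -
    have "1 \<le> c1 * c1" using mult_mono[OF c1g c1g] c1g by simp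
    moreover have "0 \<le> c2 * c2" by simp
    moreover have "(c1^2-1)*(c2^2-1) = (c1*c2)^2 - (c1*c1 + c2*c2) + 1"
      by (simp add: power2_eq_square algebra_simps)
    ultimately show ?thesis by linarith
  qed
  have chib: "(chi_val P)^2 \<le> (c1*c2)^2" using chi2 sq1 zero_le_power2[of "c0 - c1*c2"] by linarith
  have habs: "\<bar>chi_val P\<bar> \<le> c1*c2"
    using chib abs_le_square_iff[of "chi_val P" "c1*c2"] c12 by simp
  have hx: "\<bar>chi_val P\<bar> \<le> (d1^2-1)*(d2^2-1)/4" using habs unfolding d1s d2s by simp
  have c0b: "(c0 - c1*c2)^2 \<le> (c1*c2)^2"
    using chi2 sq1 zero_le_power2[of "chi_val P"] by linarith
  have "\<bar>c0 - c1*c2\<bar> \<le> c1*c2" using c0b abs_le_square_iff[of "c0 - c1*c2" "c1*c2"] c12 by simp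
  then have c0le: "c0 \<le> 2*(c1*c2)" by linarith
  have "d0^2 \<le> (d1*d2)^2"
  proof -
    have "(d1*d2)^2 = (1+2*c1)*(1+2*c2)" by (simp add: power_mult_distrib d1s d2s)
    also have "\<dots> = 1 + 2*c1 + 2*c2 + 4*(c1*c2)" by (simp add: algebra_simps)
    finally show ?thesis using d0s c0le c1g c2g by linarith
  qed
  then have h5: "d0 \<le> d1*d2" by (rule power2_le_imp_le) (use dpos in simp)
  have mx: "d0 = Max {d0, d1, d2}" using assms(4) unfolding d0_def d1_def d2_def .
  have h3: "d1 \<le> d0" by (subst mx, rule Max_ge) auto
  have h4: "d2 \<le> d0" by (subst mx, rule Max_ge) auto
  have al: "alpha_val P = (1 - (d0^2+d1^2+d2^2))/2"
    unfolding alpha_val_def d0s d1s d2s c0_def c1_def c2_def by simp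
  have rd: "r_d P \<epsilon> = 4 / (3*(d0^2+1)*(d1^2+1)*(d2^2+1)) *
      ((d0^2+d1^2+d2^2-1)*(d0*d1*d2-d0-d1-d2) - 2*\<epsilon>*chi_val P*(d0*d1+d1*d2+d2*d0-1))"
  proof -
    have a2: "- 2 * alpha_val P = d0^2+d1^2+d2^2-1" unfolding al by simp
    show ?thesis
      unfolding r_d_def gamma_val_def d0_def[symmetric] d1_def[symmetric] d2_def[symmetric] a2
      by (simp only: mult.assoc)
  qed
  have M: "\<bar>r_d P \<epsilon>\<bar> \<le> rho*(d1+d2)"
    unfolding rd using main_abs[OF d1g d2g h3 h4 h5 hx assms(5)] by (simp add: mult.assoc)
  have rpos: "0 \<le> rho" unfolding rho_def by simp
  have r0: "r_i P \<epsilon> 0 \<le> rho"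
  proof -
    have "r_i P \<epsilon> 0 = \<bar>r_d P \<epsilon>\<bar> / (d1 + d2)" unfolding r_i_def d1_def d2_def by (simp add: numeral_2_eq_2)
    also have "\<dots> \<le> rho" using M dpos by (simp add: pos_divide_le_eq)
    finally show ?thesis .
  qed
  have r1: "r_i P \<epsilon> 1 \<le> rho"
  proof -
    have "r_i P \<epsilon> 1 = \<bar>r_d P \<epsilon>\<bar> / (d2 + d0)" unfolding r_i_def d0_def d2_def by (simp add: numeral_2_eq_2)
    also have "\<dots> \<le> rho" using M dpos h3 rpos mult_left_mono[of "d1+d2" "d2+d0" rho]
      by (simp add: pos_divide_le_eq)
    finally show ?thesis .
  qed
  have r2: "r_i P \<epsilon> 2 \<le> rho"
  proof -
    have "r_i P \<epsilon> 2 = \<bar>r_d P \<epsilon>\<bar> / (d0 + d1)" unfolding r_i_def d0_def d1_def by (simp add: numeral_2_eq_2)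
    also have "\<dots> \<le> rho" using M dpos h4 rpos mult_left_mono[of "d1+d2" "d0+d1" rho]
      by (simp add: pos_divide_le_eq)
    finally show ?thesis .
  qed
  show ?thesis
  proof (intro allI impI)
    fix i :: nat assume "i < 3"
    then have "i = 0 \<or> i = 1 \<or> i = 2" by auto
    then show "r_i P \<epsilon> i \<le> rho" using r0 r1 r2 by auto
  qed
qed

end
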